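(* Let $k\ge1$, $G=(V,E)$ an inductively $k$-independent graph with $k$-independence ordering $v_1,\dots,v_n$, $f:2^V\to\mathbb{R}_{\ge0}$ monotone submodular with $f(\emptyset)=0$, and $\beta>0$. Run algorithm PREEMPTIVE-GREEDY (described in the context), let $S_{\mathrm{out}}$ be its output and $U$ the set of all vertices that were ever contained in $S$ during the run. Then $f(U)\le(1+\beta^{-1})f(S_{\mathrm{out}})$.
   Context: $N(v)$ is the neighbourhood of $v$ (excluding $v$); $G$ is inductively $k$-independent with $k$-independence ordering $v_1,\dots,v_n$ if for every $i$, $G[N(v_i)\cap\{v_i,\dots,v_n\}]$ has no independent set of size more than $k$. Order $V$ by $v_1<\dots<v_n$. For $S\subseteq V$: $f_S(v)=f(S\cup\{v\})-f(S)$, and $\nu_f(S,u)=f_{S'}(u)$ where $S'=\{s\in S:s<u\}$. Algorithm PREEMPTIVE-GREEDY (parameter $\beta>0$): start with $S=\emptyset$; for $i=1,\dots,n$: let $C_i=N(v_i)\cap S$; if $f_S(v_i)\ge(1+\beta)\sum_{u\in C_i}\nu_f(S,u)$, replace $S$ by $(S\setminus C_i)\cup\{v_i\}$. Return the final $S$ as $S_{\mathrm{out}}$. *)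

theory Defs
  imports "HOL-Analysis.Analysis"
begin

definition simple_graph :: "'a set \<Rightarrow> ('a \<Rightarrow> 'a \<Rightarrow> bool) \<Rightarrow> bool" where
  "simple_graph V E \<longleftrightarrow> finite V \<and> (\<forall>u v. E u v \<longrightarrow> u \<in> V \<and> v \<in> V)
     \<and> (\<forall>u v. E u v \<longrightarrow> E v u) \<and> (\<forall>v. \<not> E v v)"

definition nbhd :: "'a set \<Rightarrow> ('a \<Rightarrow> 'a \<Rightarrow> bool) \<Rightarrow> 'a \<Rightarrow> 'a set" where
  "nbhd V E v = {u \<in> V. E v u}"

definition independent_set :: "('a \<Rightarrow> 'a \<Rightarrow> bool) \<Rightarrow> 'a set \<Rightarrow> bool" where
  "independent_set E I \<longleftrightarrow> (\<forall>x\<in>I. \<forall>y\<in>I. \<not> E x y)"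

definition k_independence_ordering ::
    "nat \<Rightarrow> 'a set \<Rightarrow> ('a \<Rightarrow> 'a \<Rightarrow> bool) \<Rightarrow> 'a list \<Rightarrow> bool" where
  "k_independence_ordering k V E vs \<longleftrightarrow> distinct vs \<and> set vs = V \<and>
     (\<forall>i < length vs. \<forall>I. I \<subseteq> nbhd V E (vs ! i) \<inter> set (drop i vs) \<and> independent_set E I
          \<longrightarrow> card I \<le> k)"

definition before :: "'a list \<Rightarrow> 'a \<Rightarrow> 'a \<Rightarrow> bool" where
  "before vs u w \<longleftrightarrow> (\<exists>i j. i < j \<and> j < length vs \<and> vs ! i = u \<and> vs ! j = w)"

definition monotone_setfun :: "'a set \<Rightarrow> ('a set \<Rightarrow> real) \<Rightarrow> bool" where
  "monotone_setfun V f \<longleftrightarrow> (\<forall>A B. A \<subseteq> B \<and> B \<subseteq> V \<longrightarrow> f A \<le> f B)"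

definition submodular_setfun :: "'a set \<Rightarrow> ('a set \<Rightarrow> real) \<Rightarrow> bool" where
  "submodular_setfun V f \<longleftrightarrow>
     (\<forall>A B. A \<subseteq> V \<and> B \<subseteq> V \<longrightarrow> f (A \<union> B) + f (A \<inter> B) \<le> f A + f B)"

definition marg :: "('a set \<Rightarrow> real) \<Rightarrow> 'a set \<Rightarrow> 'a \<Rightarrow> real" where
  "marg f S v = f (S \<union> {v}) - f S"

definition nu :: "'a list \<Rightarrow> ('a set \<Rightarrow> real) \<Rightarrow> 'a set \<Rightarrow> 'a \<Rightarrow> real" where
  "nu vs f S u = marg f {s \<in> S. before vs s u} u"

definition pg_step ::
    "'a list \<Rightarrow> 'a set \<Rightarrow> ('a \<Rightarrow> 'a \<Rightarrow> bool) \<Rightarrow> ('a set \<Rightarrow> real) \<Rightarrow> real \<Rightarrow> 'a set \<Rightarrow> 'a \<Rightarrow> 'a set" where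
  "pg_step vs V E f \<beta> S v =
     (let C = nbhd V E v \<inter> S in
      if marg f S v \<ge> (1 + \<beta>) * (\<Sum>u\<in>C. nu vs f S u) then (S - C) \<union> {v} else S)"

definition pg_state ::
    "'a list \<Rightarrow> 'a set \<Rightarrow> ('a \<Rightarrow> 'a \<Rightarrow> bool) \<Rightarrow> ('a set \<Rightarrow> real) \<Rightarrow> real \<Rightarrow> nat \<Rightarrow> 'a set" where
  "pg_state vs V E f \<beta> i = foldl (pg_step vs V E f \<beta>) {} (take i vs)"

definition pg_out ::
    "'a list \<Rightarrow> 'a set \<Rightarrow> ('a \<Rightarrow> 'a \<Rightarrow> bool) \<Rightarrow> ('a set \<Rightarrow> real) \<Rightarrow> real \<Rightarrow> 'a set" where
  "pg_out vs V E f \<beta> = pg_state vs V E f \<beta> (length vs)"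

definition pg_ever ::
    "'a list \<Rightarrow> 'a set \<Rightarrow> ('a \<Rightarrow> 'a \<Rightarrow> bool) \<Rightarrow> ('a set \<Rightarrow> real) \<Rightarrow> real \<Rightarrow> 'a set" where
  "pg_ever vs V E f \<beta> = (\<Union>i \<le> length vs. pg_state vs V E f \<beta> i)"

end

theory Submission
  imports Defs
begin

lemma before_take:
  assumes "distinct vs" "u \<in> set (take n vs)" "n < length vs"
  shows "before vs u (vs ! n)"
proof -
  obtain i where "i < length (take n vs)" "take n vs ! i = u" using assms(2) by (auto simp: in_set_conv_nth)
  then show ?thesis unfolding before_def using assms(3)
    by (intro exI[of _ i] exI[of _ n]) auto
qed

lemma before_asym:
  assumes "distinct vs" "before vs a b"
  shows "\<not> before vs b a"
proof
  assume "before vs b a"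
  then obtain i j where ij: "i < j" "j < length vs" "vs ! i = b" "vs ! j = a" unfolding before_def by blast
  obtain i' j' where ij': "i' < j'" "j' < length vs" "vs ! i' = a" "vs ! j' = b" using assms(2) unfolding before_def by blast
  have "i = j'" using ij ij' assms(1) nth_eq_iff_index_eq by (metis order.strict_trans)
  moreover have "j = i'" using ij ij' assms(1) nth_eq_iff_index_eq by (metis order.strict_trans)
  ultimately show False using ij ij' by simp
qed

lemma before_irrefl:
  assumes "distinct vs"
  shows "\<not> before vs a a"
proof
  assume "before vs a a"
  then obtain i j where ij: "i < j" "j < length vs" "vs ! i = a" "vs ! j = a" unfolding before_def by blast
  then show False using assms nth_eq_iff_index_eq by (metis order.strict_trans less_irrefl)
qed

lemma nth_notin_take:
  assumes "distinct vs" "i < length vs"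
  shows "vs ! i \<notin> set (take i vs)"
proof -
  have "distinct (take (Suc i) vs)" using assms by simp
  moreover have "take (Suc i) vs = take i vs @ [vs ! i]" using assms by (simp add: take_Suc_conv_app_nth)
  ultimately show ?thesis by simp
qed

lemma dr:
  assumes "monotone_setfun V f" "submodular_setfun V f" "A \<subseteq> B" "B \<subseteq> V" "x \<in> V"
  shows "marg f B x \<le> marg f A x"
proof -
  have AV: "A \<union> {x} \<subseteq> V" using assms by auto
  have h0: "f ((A \<union> {x}) \<union> B) + f ((A \<union> {x}) \<inter> B) \<le> f (A \<union> {x}) + f B"
    using assms(2,4) AV unfolding submodular_setfun_def by blast
  have e: "(A \<union> {x}) \<union> B = B \<union> {x}" using assms by auto
  have "f (B \<union> {x}) + f ((A \<union> {x}) \<inter> B) \<le> f (A \<union> {x}) + f B" using h0 unfolding e .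
  moreover have "f A \<le> f ((A \<union> {x}) \<inter> B)"
  proof -
    have "A \<subseteq> (A \<union> {x}) \<inter> B" "(A \<union> {x}) \<inter> B \<subseteq> V" using assms by auto
    then show ?thesis using assms(1) unfolding monotone_setfun_def by blast
  qed
  ultimately show ?thesis unfolding marg_def by linarith
qed

lemma tele:
  assumes "distinct vs"
  shows "S \<subseteq> set (take n vs) \<Longrightarrow> f S = f {} + (\<Sum>u\<in>S. marg f {s\<in>S. before vs s u} u)"
proof (induction n arbitrary: S)
  case 0
  then show ?case by simp
next
  case (Suc n)
  show ?case
  proof (cases "n < length vs")
    case False
    then have "take (Suc n) vs = take n vs" by simp
    then show ?thesis using Suc.prems by (intro Suc.IH) simp
  next
    case True
    have tk: "take (Suc n) vs = take n vs @ [vs ! n]" using True by (simp add: take_Suc_conv_app_nth)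
    show ?thesis
    proof (cases "vs ! n \<in> S")
      case False
      then have "S \<subseteq> set (take n vs)" using Suc.prems tk by auto
      then show ?thesis by (rule Suc.IH)
    next
      case True2: True
      define v where "v = vs ! n"
      define S' where "S' = S - {v}"
      have S'sub: "S' \<subseteq> set (take n vs)" using Suc.prems tk unfolding S'_def v_def by auto
      have fin: "finite S" using Suc.prems finite_subset by blast
      have "(\<Sum>u\<in>S. marg f {s\<in>S. before vs s u} u) = marg f {s\<in>S. before vs s v} v + (\<Sum>u\<in>S'. marg f {s\<in>S. before vs s u} u)"
        unfolding S'_def using fin True2 v_def by (simp add: sum.remove)
      moreover have h2: "{s\<in>S. before vs s v} = S'"
      proof
        show "{s\<in>S. before vs s v} \<subseteq> S'"
          using before_irrefl[OF assms, of v] unfolding S'_def by blast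
        show "S' \<subseteq> {s\<in>S. before vs s v}"
        proof
          fix s assume s: "s \<in> S'"
          then have "s \<in> set (take n vs)" using S'sub by blast
          then have "before vs s v" using before_take[OF assms _ True] v_def by simp
          then show "s \<in> {s\<in>S. before vs s v}" using s unfolding S'_def by simp
        qed
      qed
      moreover have "(\<Sum>u\<in>S'. marg f {s\<in>S. before vs s u} u) = (\<Sum>u\<in>S'. marg f {s\<in>S'. before vs s u} u)"
      proof (rule sum.cong)
        fix u assume "u \<in> S'"
        then have "u \<in> set (take n vs)" using S'sub by blast
        then have "before vs u v" using before_take[OF assms _ True] v_def by simp
        then have nb: "\<not> before vs v u" using before_asym[OF assms] by blast
        have "{s\<in>S. before vs s u} = {s\<in>S'. before vs s u}"
          using nb unfolding S'_def by blast
        then show "marg f {s\<in>S. before vs s u} u = marg f {s\<in>S'. before vs s u} u" by simp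
      qed simp
      moreover have "f S = f S' + marg f S' v"
      proof -
        have "S' \<union> {v} = S" using True2 unfolding S'_def v_def by blast
        then show ?thesis unfolding marg_def by simp
      qed
      moreover note Suc.IH[OF S'sub]
      moreover have "marg f {s\<in>S. before vs s v} v = marg f S' v" using h2 by simp
      ultimately show ?thesis by linarith
    qed
  qed
qed


lemma stepsub: "pg_step vs V E f \<beta> T v \<subseteq> T \<union> {v}"
  unfolding pg_step_def Let_def by auto

theorem lemma14:
  fixes k :: nat and V :: "'a set" and E :: "'a \<Rightarrow> 'a \<Rightarrow> bool" and vs :: "'a list"
    and f :: "'a set \<Rightarrow> real" and \<beta> :: real
  assumes "k \<ge> 1"
    and "simple_graph V E"
    and "k_independence_ordering k V E vs"
    and "\<forall>A. A \<subseteq> V \<longrightarrow> f A \<ge> 0"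
    and "monotone_setfun V f"
    and "submodular_setfun V f"
    and "f {} = 0"
    and "\<beta> > 0"
  shows "f (pg_ever vs V E f \<beta>) \<le> (1 + 1 / \<beta>) * f (pg_out vs V E f \<beta>)"
proof -
  have dist: "distinct vs" and Vs: "set vs = V" using assms(3) unfolding k_independence_ordering_def by auto
  define n where "n = length vs"
  define S where "S i = pg_state vs V E f \<beta> i" for i
  define pos where "pos u = (THE j. j < length vs \<and> vs ! j = u)" for u
  define w where "w u = marg f (S (pos u) - nbhd V E u) u" for u
  define U where "U i = (\<Union>j\<le>i. S j)" for i
  have posn: "pos (vs ! j) = j" if "j < length vs" for j
    unfolding pos_def
  proof (rule the_equality)
    show "j < length vs \<and> vs ! j = vs ! j" using that by simp
  next
    fix j' assume "j' < length vs \<and> vs ! j' = vs ! j"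
    then have a: "j' < length vs" "vs ! j' = vs ! j" by auto
    show "j' = j" using nth_eq_iff_index_eq[OF dist a(1) that] a(2) by simp
  qed
  have pos_nth: "pos u < length vs \<and> vs ! pos u = u" if uin: "u \<in> set vs" for u
  proof -
    obtain j where "j < length vs" "vs ! j = u" using uin unfolding in_set_conv_nth by blast
    then show ?thesis using posn by auto
  qed
  have step: "S (Suc i) = pg_step vs V E f \<beta> (S i) (vs ! i)" if "i < length vs" for i
    unfolding S_def pg_state_def using that by (simp add: take_Suc_conv_app_nth)
  have stepge: "S (Suc i) = S i" if "\<not> i < length vs" for i
    unfolding S_def pg_state_def using that by simp
  have sub: "S i \<subseteq> set (take i vs)" for i
  proof (induction i)
    case 0 then show ?case by (simp add: S_def pg_state_def)
  next
    case (Suc i)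
    show ?case
    proof (cases "i < length vs")
      case True
      have "S (Suc i) \<subseteq> S i \<union> {vs ! i}" unfolding step[OF True] by (rule stepsub)
      moreover have "set (take (Suc i) vs) = set (take i vs) \<union> {vs ! i}"
        using True by (simp add: take_Suc_conv_app_nth)
      ultimately show ?thesis using Suc.IH by blast
    next
      case False
      have "S (Suc i) = S i" by (rule stepge[OF False])
      moreover have "set (take i vs) \<subseteq> set (take (Suc i) vs)" by (rule set_take_subset_set_take) simp
      ultimately show ?thesis using Suc.IH by blast
    qed
  qed
  have SV: "S i \<subseteq> V" for i using sub[of i] set_take_subset[of i vs] Vs by blast
  have finS: "finite (S i)" for i using sub finite_subset by blast
  have I2: "\<forall>u\<in>S i. {s\<in>S i. before vs s u} \<subseteq> S (pos u) - nbhd V E u" for i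
  proof (induction i)
    case 0 then show ?case by (simp add: S_def pg_state_def)
  next
    case (Suc i)
    show ?case
    proof (cases "i < length vs")
      case False then show ?thesis using Suc stepge by metis
    next
      case True
      define v where "v = vs ! i"
      define T where "T = S i"
      define C where "C = nbhd V E v \<inter> T"
      show ?thesis
      proof (cases "marg f T v \<ge> (1 + \<beta>) * (\<Sum>u\<in>C. nu vs f T u)")
        case False
        then have "S (Suc i) = T" using step[OF True] unfolding pg_step_def T_def C_def v_def Let_def by simp
        then show ?thesis using Suc unfolding T_def by simp
      next
        case cnd: True
        then have SS: "S (Suc i) = (T - C) \<union> {v}" using step[OF True] unfolding pg_step_def T_def C_def v_def Let_def by simp
        have Tb: "before vs t v" if "t \<in> T" for t
          using before_take[OF dist _ True] sub that unfolding T_def v_def by blast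
        show ?thesis
        proof
          fix u assume u: "u \<in> S (Suc i)"
          show "{s\<in>S (Suc i). before vs s u} \<subseteq> S (pos u) - nbhd V E u"
          proof (cases "u = v")
            case True
            then have "pos u = i" using posn \<open>i < length vs\<close> v_def by simp
            then show ?thesis using True SS before_irrefl[OF dist, of v] unfolding C_def T_def by auto
          next
            case False
            then have uT: "u \<in> T" using u SS by auto
            then have "\<not> before vs v u" using Tb before_asym[OF dist] by blast
            then have "{s\<in>S (Suc i). before vs s u} \<subseteq> {s\<in>S i. before vs s u}" using SS unfolding T_def by auto
            then show ?thesis using Suc uT unfolding T_def by blast
          qed
        qed
      qed
    qed
  qed
  have nu_ge: "w u \<le> nu vs f (S i) u" if "u \<in> S i" for u i
  proof -
    have "u \<in> V" using that SV by blast
    then show ?thesis unfolding w_def nu_def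
      using dr[OF assms(5,6), of "{s\<in>S i. before vs s u}" "S (pos u) - nbhd V E u" u] I2[of i] that SV[of "pos u"]
      by blast
  qed
  have Usub: "U i \<subseteq> set (take i vs)" for i
    unfolding U_def using sub by (auto dest: set_take_subset_set_take[THEN subsetD, rotated])
  have finU: "finite (U i)" for i using Usub finite_subset by blast
  have USuc: "U (Suc i) = U i \<union> S (Suc i)" for i unfolding U_def by (auto simp: atMost_Suc)
  have SU: "S i \<subseteq> U i" for i unfolding U_def by auto
  have I3: "\<beta> * (\<Sum>u\<in>U i. w u) \<le> (1 + \<beta>) * (\<Sum>u\<in>S i. w u)" for i
  proof (induction i)
    case 0 then show ?case using assms(8) by (simp add: U_def S_def pg_state_def)
  next
    case (Suc i)
    show ?case
    proof (cases "i < length vs")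
      case False then show ?thesis using Suc stepge USuc SU by (metis sup.absorb1)
    next
      case True
      define v where "v = vs ! i"
      define T where "T = S i"
      define C where "C = nbhd V E v \<inter> T"
      show ?thesis
      proof (cases "marg f T v \<ge> (1 + \<beta>) * (\<Sum>u\<in>C. nu vs f T u)")
        case False
        then have "S (Suc i) = T" using step[OF True] unfolding pg_step_def T_def C_def v_def Let_def by simp
        then show ?thesis using Suc USuc SU unfolding T_def by (metis sup.absorb1)
      next
        case cnd: True
        then have SS: "S (Suc i) = (T - C) \<union> {v}" using step[OF True] unfolding pg_step_def T_def C_def v_def Let_def by simp
        have vU: "v \<notin> U i" using Usub nth_notin_take[OF dist True] v_def by blast
        have vT: "v \<notin> T" using vU SU T_def by blast
        have U': "U (Suc i) = insert v (U i)" using USuc[of i] SS SU[of i] unfolding T_def by auto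
        have sU: "(\<Sum>u\<in>U (Suc i). w u) = w v + (\<Sum>u\<in>U i. w u)" using U' vU finU by simp
        have CT: "C \<subseteq> T" unfolding C_def by auto
        have sS: "(\<Sum>u\<in>S (Suc i). w u) = w v + ((\<Sum>u\<in>T. w u) - (\<Sum>u\<in>C. w u))"
          using SS vT CT finS[of i] unfolding T_def by (simp add: sum_diff finite_subset)
        have vV: "v \<in> V" using Vs True v_def by auto
        have wv: "w v = marg f (T - C) v"
        proof -
          have "S i - nbhd V E v = S i - (nbhd V E v \<inter> S i)" by blast
          then show ?thesis unfolding w_def C_def T_def using posn[OF True] v_def by simp
        qed
        have "marg f T v \<le> marg f (T - C) v" using dr[OF assms(5,6) _ _ vV, of "T - C" T] SV T_def by blast
        moreover have "(\<Sum>u\<in>C. w u) \<le> (\<Sum>u\<in>C. nu vs f T u)"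
          by (rule sum_mono) (use nu_ge CT T_def in blast)
        ultimately have key: "(1 + \<beta>) * (\<Sum>u\<in>C. w u) \<le> w v" using cnd wv assms(8)
          by (smt (verit) mult_left_mono)
        have e1: "(1 + \<beta>) * (\<Sum>u\<in>S (Suc i). w u) = (1 + \<beta>) * w v + (1 + \<beta>) * (\<Sum>u\<in>T. w u) - (1 + \<beta>) * (\<Sum>u\<in>C. w u)"
          unfolding sS by (simp add: algebra_simps)
        have e2: "\<beta> * (\<Sum>u\<in>U (Suc i). w u) = \<beta> * w v + \<beta> * (\<Sum>u\<in>U i. w u)"
          unfolding sU by (simp add: algebra_simps)
        have e3: "(1 + \<beta>) * w v = w v + \<beta> * w v" by (simp add: algebra_simps)
        show ?thesis using Suc.IH key e1 e2 e3 unfolding T_def by linarith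
      qed
    qed
  qed
  have fU: "f (U n) \<le> (\<Sum>u\<in>U n. w u)"
  proof -
    have "f (U n) = f {} + (\<Sum>u\<in>U n. marg f {s\<in>U n. before vs s u} u)"
      using tele[OF dist Usub] by blast
    also have "\<dots> \<le> (\<Sum>u\<in>U n. w u)"
      unfolding assms(7)
    proof (simp, rule sum_mono)
      fix u assume uU: "u \<in> U n"
      then have uvs: "u \<in> set vs" using Usub[of n] set_take_subset[of n vs] by blast
      note pu = pos_nth[OF uvs]
      have A1: "S (pos u) - nbhd V E u \<subseteq> {s\<in>U n. before vs s u}"
      proof
        fix s assume s: "s \<in> S (pos u) - nbhd V E u"
        have "pos u \<le> n" using pu unfolding n_def by simp
        then have "s \<in> U n" using s unfolding U_def by blast
        moreover have "s \<in> set (take (pos u) vs)" using s sub[of "pos u"] by blast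
        then have "before vs s (vs ! pos u)" using before_take[OF dist _ conjunct1[OF pu]] by blast
        then have "before vs s u" using pu by simp
        ultimately show "s \<in> {s\<in>U n. before vs s u}" by simp
      qed
      have A2: "{s\<in>U n. before vs s u} \<subseteq> V" using Usub[of n] Vs set_take_subset[of n vs] by blast
      have uV: "u \<in> V" using uvs Vs by simp
      show "marg f {s\<in>U n. before vs s u} u \<le> w u"
        unfolding w_def by (rule dr[OF assms(5,6) A1 A2 uV])
    qed
    finally show ?thesis .
  qed
  have fS: "(\<Sum>u\<in>S n. w u) \<le> f (S n)"
  proof -
    have "(\<Sum>u\<in>S n. w u) \<le> (\<Sum>u\<in>S n. nu vs f (S n) u)" by (rule sum_mono) (rule nu_ge)
    also have "\<dots> = f (S n)"
    proof -
      have "f (S n) = f {} + (\<Sum>u\<in>S n. marg f {s\<in>S n. before vs s u} u)" by (rule tele[OF dist sub[of n]])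
      then show ?thesis unfolding nu_def assms(7) by linarith
    qed
    finally show ?thesis .
  qed
  have "(\<Sum>u\<in>U n. w u) \<le> (1 + 1/\<beta>) * (\<Sum>u\<in>S n. w u)"
  proof -
    have "(\<Sum>u\<in>U n. w u) = (\<beta> * (\<Sum>u\<in>U n. w u)) / \<beta>" using assms(8) by simp
    also have "\<dots> \<le> ((1 + \<beta>) * (\<Sum>u\<in>S n. w u)) / \<beta>" by (rule divide_right_mono[OF I3[of n]]) (use assms(8) in simp)
    also have "\<dots> = (1 + 1/\<beta>) * (\<Sum>u\<in>S n. w u)" using assms(8) by (simp add: field_simps)
    finally show ?thesis .
  qed
  also have "\<dots> \<le> (1 + 1/\<beta>) * f (S n)" using fS assms(8) by (intro mult_left_mono) auto
  finally have "f (U n) \<le> (1 + 1/\<beta>) * f (S n)" using fU by linarith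
  moreover have "pg_ever vs V E f \<beta> = U n" unfolding pg_ever_def U_def S_def n_def by simp
  moreover have "pg_out vs V E f \<beta> = S n" unfolding pg_out_def S_def n_def by simp
  ultimately show ?thesis by simp
qed

end
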